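(* There exist an absolute constant $C>0$ and infinitely many positive integers $n$ such that for each such $n$ there is an undirected, unweighted graph $G$ on $n$ vertices with maximum degree $3$ for which every hub labeling $\{S_v\}_{v\in V(G)}$ of $G$ satisfies $$\frac{1}{n}\sum_{v\in V(G)}|S_v|\;\ge\;\frac{n}{2^{C\sqrt{\log n}}}.$$
   Context: For an undirected unweighted graph $G=(V,E)$, a hub labeling is a family of sets $S_v\subseteq V$, $v\in V$, such that for every pair $u,v\in V$ at finite distance there is a vertex $w\in S_u\cap S_v$ lying on some shortest $u$–$v$ path, i.e. $\mathrm{dist}(u,w)+\mathrm{dist}(w,v)=\mathrm{dist}(u,v)$. Its average size is $\frac1n\sum_v|S_v|$. *)

theory Defs
  imports "HOL-Analysis.Analysis"
begin

definition simple_graph :: "nat \<Rightarrow> (nat \<Rightarrow> nat \<Rightarrow> bool) \<Rightarrow> bool" where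
  "simple_graph n E \<longleftrightarrow>
     (\<forall>u v. E u v \<longrightarrow> u < n \<and> v < n) \<and> (\<forall>u v. E u v \<longrightarrow> E v u) \<and> (\<forall>u. \<not> E u u)"

definition degree :: "nat \<Rightarrow> (nat \<Rightarrow> nat \<Rightarrow> bool) \<Rightarrow> nat \<Rightarrow> nat" where
  "degree n E v = card {u. u < n \<and> E v u}"

definition max_degree :: "nat \<Rightarrow> (nat \<Rightarrow> nat \<Rightarrow> bool) \<Rightarrow> nat" where
  "max_degree n E = Max (degree n E ` {0..<n})"

definition has_walk :: "nat \<Rightarrow> (nat \<Rightarrow> nat \<Rightarrow> bool) \<Rightarrow> nat \<Rightarrow> nat \<Rightarrow> nat \<Rightarrow> bool" where
  "has_walk n E k u v \<longleftrightarrow>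
     (\<exists>p :: nat \<Rightarrow> nat. p 0 = u \<and> p k = v \<and> (\<forall>i\<le>k. p i < n) \<and> (\<forall>i<k. E (p i) (p (Suc i))))"

definition reachable :: "nat \<Rightarrow> (nat \<Rightarrow> nat \<Rightarrow> bool) \<Rightarrow> nat \<Rightarrow> nat \<Rightarrow> bool" where
  "reachable n E u v \<longleftrightarrow> (\<exists>k. has_walk n E k u v)"

text \<open>Graph distance (meaningful only when reachable).\<close>
definition gdist :: "nat \<Rightarrow> (nat \<Rightarrow> nat \<Rightarrow> bool) \<Rightarrow> nat \<Rightarrow> nat \<Rightarrow> nat" where
  "gdist n E u v = (LEAST k. has_walk n E k u v)"

definition hub_labeling :: "nat \<Rightarrow> (nat \<Rightarrow> nat \<Rightarrow> bool) \<Rightarrow> (nat \<Rightarrow> nat set) \<Rightarrow> bool" where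
  "hub_labeling n E S \<longleftrightarrow>
     (\<forall>v<n. S v \<subseteq> {0..<n}) \<and>
     (\<forall>u<n. \<forall>v<n. reachable n E u v \<longrightarrow>
        (\<exists>w \<in> S u \<inter> S v. reachable n E u w \<and> reachable n E w v \<and>
            gdist n E u w + gdist n E w v = gdist n E u v))"

end

theory Submission imports Defs "HOL-Library.FuncSet"
begin

datatype vtx = Out nat "nat \<Rightarrow> nat" nat | In nat "nat \<Rightarrow> nat" nat | Pend nat "nat \<Rightarrow> nat" nat nat

lemma mixed_radix:
  fixes a a' b b' m :: nat
  assumes "a < m" "a' < m" "a + m * b = a' + m * b'"
  shows "a = a' \<and> b = b'"
proof -
  have "(a + m * b) mod m = a" using assms(1) by simp
  moreover have "(a' + m * b') mod m = a'" using assms(2) by simp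
  ultimately have 1: "a = a'" using assms(3) by metis
  hence "m * b = m * b'" using assms(3) by simp
  moreover have "m > 0" using assms(1) by simp
  ultimately show ?thesis using 1 by simp
qed

lemma mixed_lt:
  fixes a b m c :: nat
  assumes "a < m" "b < c"
  shows "a + m * b < m * c"
proof -
  have "m * (b+1) \<le> m * c" using assms(2) by (intro mult_le_mono2) simp
  thus ?thesis using assms(1) by (simp add: algebra_simps)
qed

lemma pc_lt: "(\<forall>j<K. p j < (Q::nat)) \<Longrightarrow> (\<Sum>j<K. p j * Q^j) < Q^K"
proof (induction K)
  case 0 then show ?case by simp
next
  case (Suc K)
  have "(\<Sum>j<Suc K. p j * Q^j) = (\<Sum>j<K. p j * Q^j) + Q^K * p K" by simp
  also have "\<dots> < Q^K * Q" using Suc by (intro mixed_lt) auto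
  finally show ?case by (simp add: mult.commute)
qed

lemma pc_inj: "(\<forall>j<K. p j < (Q::nat) \<and> q j < Q) \<Longrightarrow> (\<Sum>j<K. p j * Q^j) = (\<Sum>j<K. q j * Q^j)
   \<Longrightarrow> \<forall>j<K. p j = q j"
proof (induction K)
  case 0 then show ?case by simp
next
  case (Suc K)
  have "(\<Sum>j<K. p j * Q^j) + Q^K * p K = (\<Sum>j<K. q j * Q^j) + Q^K * q K"
    using Suc.prems(2) by (simp add: mult.commute)
  moreover have "(\<Sum>j<K. p j * Q^j) < Q^K" "(\<Sum>j<K. q j * Q^j) < Q^K"
    using Suc.prems(1) by (auto intro!: pc_lt)
  ultimately have "(\<Sum>j<K. p j * Q^j) = (\<Sum>j<K. q j * Q^j) \<and> p K = q K"
    using mixed_radix by blast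
  then have h: "(\<Sum>j<K. p j * Q^j) = (\<Sum>j<K. q j * Q^j)" "p K = q K" by auto
  have "\<forall>j<K. p j = q j" using Suc.IH Suc.prems(1) h(1) by simp
  then show ?case using h(2) less_Suc_eq by auto
qed

lemma has_walk_trans:
  assumes "has_walk n E k1 u v" "has_walk n E k2 v w"
  shows "has_walk n E (k1 + k2) u w"
proof -
  obtain p1 where p1: "p1 0 = u" "p1 k1 = v" "\<forall>i\<le>k1. p1 i < n" "\<forall>i<k1. E (p1 i) (p1 (Suc i))"
    using assms(1) unfolding has_walk_def by blast
  obtain p2 where p2: "p2 0 = v" "p2 k2 = w" "\<forall>i\<le>k2. p2 i < n" "\<forall>i<k2. E (p2 i) (p2 (Suc i))"
    using assms(2) unfolding has_walk_def by blast
  define p where "p i = (if i \<le> k1 then p1 i else p2 (i - k1))" for i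
  have "p 0 = u" using p1 by (simp add: p_def)
  moreover have "p (k1 + k2) = w" using p1 p2 by (cases "k2 = 0") (auto simp: p_def)
  moreover have "\<forall>i\<le>k1+k2. p i < n" using p1 p2 by (auto simp: p_def)
  moreover have "\<forall>i<k1+k2. E (p i) (p (Suc i))"
  proof (intro allI impI)
    fix i assume i: "i < k1 + k2"
    show "E (p i) (p (Suc i))"
    proof (cases "i < k1")
      case True thus ?thesis using p1 by (auto simp: p_def)
    next
      case False
      hence "Suc i - k1 = Suc (i - k1)" by simp
      thus ?thesis using False p1 p2 i by (auto simp: p_def)
    qed
  qed
  ultimately show ?thesis unfolding has_walk_def by blast
qed

locale hubG =
  fixes k :: nat
  assumes k_pos: "1 \<le> k"
begin

definition "T = (2::nat)^k"
definition "Q = 3 * T"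
definition "M = 2 * T^2 + 4"
definition "W = M + 2 * T^2"
definition "L = 2 * k + 1"
definition "PQ = Q ^ k"
definition "N = 3 * L * PQ * T * W"
definition "P t = M + 2 * t * t - 2 * t - 1"

definition pos_ok :: "(nat \<Rightarrow> nat) \<Rightarrow> bool" where
  "pos_ok p \<longleftrightarrow> p \<in> PiE {..<k} (\<lambda>_. {..<Q})"

definition upd :: "nat \<Rightarrow> (nat \<Rightarrow> nat) \<Rightarrow> nat \<Rightarrow> (nat \<Rightarrow> nat)" where
  "upd l p t = p(l mod k := p (l mod k) + t)"

definition pend_ok :: "nat \<Rightarrow> (nat \<Rightarrow> nat) \<Rightarrow> nat \<Rightarrow> bool" where
  "pend_ok l p t \<longleftrightarrow> l < 2*k \<and> pos_ok p \<and> t < T \<and> p (l mod k) + t < Q"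

fun valid :: "vtx \<Rightarrow> bool" where
  "valid (Out l p s) \<longleftrightarrow> l < 2*k \<and> pos_ok p \<and> s < T"
| "valid (In l p s) \<longleftrightarrow> 1 \<le> l \<and> l \<le> 2*k \<and> pos_ok p \<and> s < T"
| "valid (Pend l p t i) \<longleftrightarrow> pend_ok l p t \<and> 1 \<le> i \<and> i < P t"

fun fwd :: "vtx \<Rightarrow> vtx \<Rightarrow> bool" where
  "fwd (Out l p s) (Out l' p' s') \<longleftrightarrow> l' = l \<and> p' = p \<and> s' = s + 1"
| "fwd (Out l p s) (Pend l' p' t' i') \<longleftrightarrow> l' = l \<and> p' = p \<and> t' = s \<and> i' = 1"
| "fwd (In l p s) (In l' p' s') \<longleftrightarrow> l' = l \<and> p' = p \<and> s' = s + 1"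
| "fwd (In l p s) (Out l' p' s') \<longleftrightarrow> s = 0 \<and> l' = l \<and> p' = p \<and> s' = 0"
| "fwd (Pend l p t i) (Pend l' p' t' i') \<longleftrightarrow> l' = l \<and> p' = p \<and> t' = t \<and> i' = i + 1"
| "fwd (Pend l p t i) (In l' p' s') \<longleftrightarrow> i = P t - 1 \<and> l' = l + 1 \<and> p' = upd l p t \<and> s' = t"
| "fwd _ _ = False"

definition adjV :: "vtx \<Rightarrow> vtx \<Rightarrow> bool" where
  "adjV x y \<longleftrightarrow> fwd x y \<or> fwd y x"

definition pc :: "(nat \<Rightarrow> nat) \<Rightarrow> nat" where
  "pc p = (\<Sum>j<k. p j * Q^j)"

fun enc :: "vtx \<Rightarrow> nat" where
  "enc (Out l p s) = 3 * (l + L * (pc p + PQ * s))"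
| "enc (In l p s) = 3 * (l + L * (pc p + PQ * s)) + 1"
| "enc (Pend l p t i) = 3 * (l + L * (pc p + PQ * (t + T * i))) + 2"

definition E :: "nat \<Rightarrow> nat \<Rightarrow> bool" where
  "E u v \<longleftrightarrow> (\<exists>x y. valid x \<and> valid y \<and> adjV x y \<and> u = enc x \<and> v = enc y)"

lemma T_ge2: "T \<ge> 2" using k_pos unfolding T_def
  by (metis One_nat_def le_add_diff_inverse power_Suc power_increasing one_le_numeral power_one_right mult_le_mono2 numeral_le_iff)

lemma P_bounds: "P t \<ge> 3" "t < T \<Longrightarrow> P t < W"
proof -
  have "2*t \<le> 2*t*t" by (cases t) auto
  thus "P t \<ge> 3" unfolding P_def M_def by arith
  assume "t < T"
  hence "t*t < T*T" by (simp add: mult_strict_mono)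
  hence "2*t*t < 2*T^2" by (simp add: power2_eq_square)
  thus "P t < W" unfolding P_def W_def by simp
qed

lemma pos_ok_lt: "pos_ok p \<Longrightarrow> j < k \<Longrightarrow> p j < Q"
  unfolding pos_ok_def by auto

lemma pc_lt_PQ: "pos_ok p \<Longrightarrow> pc p < PQ"
  unfolding pc_def PQ_def by (rule pc_lt) (auto simp: pos_ok_lt)

lemma pc_inj': "pos_ok p \<Longrightarrow> pos_ok q \<Longrightarrow> pc p = pc q \<Longrightarrow> p = q"
proof -
  assume a: "pos_ok p" "pos_ok q" "pc p = pc q"
  have "\<forall>j<k. p j = q j" using pc_inj[of k p Q q] a by (auto simp: pc_def pos_ok_lt)
  thus "p = q" using a(1,2) unfolding pos_ok_def by (intro PiE_ext) auto
qed

lemma TW: "s < T \<Longrightarrow> s < T * W"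
proof -
  assume "s < T"
  moreover have "W \<ge> 1" unfolding W_def M_def by simp
  ultimately show ?thesis by (metis less_le_trans mult.right_neutral mult_le_mono2)
qed

lemma enc_lt: "valid x \<Longrightarrow> enc x < N"
proof (cases x)
  case (Out l p s)
  assume v: "valid x"
  have a: "pc p < PQ" "s < T * W" using v Out by (auto intro: pc_lt_PQ TW)
  have "pc p + PQ * s < PQ * (T * W)" using mixed_lt[OF a] .
  moreover have "l < L" using v Out by (auto simp: L_def)
  ultimately have "l + L * (pc p + PQ * s) < L * (PQ * (T * W))" using mixed_lt by blast
  thus ?thesis using Out unfolding N_def by simp
next
  case (In l p s)
  assume v: "valid x"
  have a: "pc p < PQ" "s < T * W" using v In by (auto intro: pc_lt_PQ TW)
  have "pc p + PQ * s < PQ * (T * W)" using mixed_lt[OF a] .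
  moreover have "l < L" using v In by (auto simp: L_def)
  ultimately have "l + L * (pc p + PQ * s) < L * (PQ * (T * W))" using mixed_lt by blast
  thus ?thesis using In unfolding N_def by simp
next
  case (Pend l p t i)
  assume v: "valid x"
  have b: "t < T" "i < W" using v Pend P_bounds(2)[of t] by (auto simp: pend_ok_def)
  have a: "pc p < PQ" "t + T * i < T * W" using v Pend mixed_lt[OF b] by (auto intro: pc_lt_PQ simp: pend_ok_def)
  have "pc p + PQ * (t + T * i) < PQ * (T * W)" using mixed_lt[OF a] .
  moreover have "l < L" using v Pend by (auto simp: L_def pend_ok_def)
  ultimately have "l + L * (pc p + PQ * (t + T * i)) < L * (PQ * (T * W))" using mixed_lt by blast
  thus ?thesis using Pend unfolding N_def by simp
qed

lemma enc_key:
  fixes l l' a a' b b' :: nat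
  assumes "l < L" "l' < L" "a < PQ" "a' < PQ" "l + L*(a + PQ*b) = l' + L*(a'+PQ*b')"
  shows "l = l' \<and> a = a' \<and> b = b'"
  using mixed_radix[OF assms(1,2,5)] mixed_radix[OF assms(3,4)] by blast

lemma three_eq: "3 * (a::nat) + c = 3 * b + d \<Longrightarrow> c < 3 \<Longrightarrow> d < 3 \<Longrightarrow> c = d \<and> a = b"
  using mixed_radix[of c 3 d a b] by (simp add: add.commute)

lemma valid_L: "valid x \<Longrightarrow> (case x of Out l p s \<Rightarrow> l < L \<and> pc p < PQ | In l p s \<Rightarrow> l < L \<and> pc p < PQ
   | Pend l p t i \<Rightarrow> l < L \<and> pc p < PQ \<and> t < T)"
  by (cases x) (auto simp: L_def pend_ok_def intro: pc_lt_PQ)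

lemma m3a: "(3*(A::nat)) mod 3 = 0" "(3*(A::nat) + 1) mod 3 = 1" "(3*(A::nat) + 2) mod 3 = 2"
  by presburger+

lemma enc_mod3: "enc (Out l p s) mod 3 = 0" "enc (In l p s) mod 3 = 1" "enc (Pend l p t i) mod 3 = 2"
  by (simp only: enc.simps m3a)+

lemma enc_inj: "valid x \<Longrightarrow> valid y \<Longrightarrow> enc x = enc y \<Longrightarrow> x = y"
proof -
  assume vx: "valid x" and vy: "valid y" and e: "enc x = enc y"
  have Lx: "case x of Out l p s \<Rightarrow> l < L \<and> pc p < PQ | In l p s \<Rightarrow> l < L \<and> pc p < PQ
   | Pend l p t i \<Rightarrow> l < L \<and> pc p < PQ \<and> t < T" using valid_L[OF vx] .
  have Ly: "case y of Out l p s \<Rightarrow> l < L \<and> pc p < PQ | In l p s \<Rightarrow> l < L \<and> pc p < PQ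
   | Pend l p t i \<Rightarrow> l < L \<and> pc p < PQ \<and> t < T" using valid_L[OF vy] .
  have m: "enc x mod 3 = enc y mod 3" using e by simp
  have m': "(case x of Out _ _ _ \<Rightarrow> 0 | In _ _ _ \<Rightarrow> 1 | Pend _ _ _ _ \<Rightarrow> (2::nat))
      = (case y of Out _ _ _ \<Rightarrow> 0 | In _ _ _ \<Rightarrow> 1 | Pend _ _ _ _ \<Rightarrow> (2::nat))"
    using m by (cases x; cases y) (simp_all add: enc_mod3 del: enc.simps)
  show "x = y"
  proof (cases x)
    case (Out l p s)
    note X = this
    obtain l' p' s' where Y: "y = Out l' p' s'" using m' X by (cases y) auto
    have "l + L * (pc p + PQ * s) = l' + L * (pc p' + PQ * s')" using e X Y by simp
    hence 1: "l = l' \<and> pc p = pc p' \<and> s = s'" using Lx Ly X Y by (intro enc_key) auto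
    moreover have "pos_ok p" "pos_ok p'" using X Y vx vy by auto
    ultimately have "p = p'" using pc_inj'[of p p'] by blast
    with X Y 1 show "x = y" by simp
  next
    case (In l p s)
    note X = this
    obtain l' p' s' where Y: "y = In l' p' s'" using m' X by (cases y) auto
    have "l + L * (pc p + PQ * s) = l' + L * (pc p' + PQ * s')" using e X Y by simp
    hence 1: "l = l' \<and> pc p = pc p' \<and> s = s'" using Lx Ly X Y by (intro enc_key) auto
    moreover have "pos_ok p" "pos_ok p'" using X Y vx vy by auto
    ultimately have "p = p'" using pc_inj'[of p p'] by blast
    with X Y 1 show "x = y" by simp
  next
    case (Pend l p t i)
    note X = this
    obtain l' p' t' i' where Y: "y = Pend l' p' t' i'" using m' X by (cases y) auto
    have "l + L * (pc p + PQ * (t + T * i)) = l' + L * (pc p' + PQ * (t' + T * i'))" using e X Y by simp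
    hence "l = l' \<and> pc p = pc p' \<and> t + T * i = t' + T * i'" using Lx Ly X Y by (intro enc_key) auto
    moreover have "t < T" "t' < T" using Lx Ly X Y by auto
    ultimately have 1: "l = l' \<and> pc p = pc p' \<and> t = t' \<and> i = i'" using mixed_radix by blast
    moreover have "pos_ok p" "pos_ok p'" using X Y vx vy by (auto simp: pend_ok_def)
    ultimately have "p = p'" using pc_inj'[of p p'] by blast
    with X Y 1 show "x = y" by simp
  qed
qed

lemma enc_inj_on: "inj_on enc {x. valid x}"
  by (rule inj_onI) (auto intro: enc_inj)

definition dec :: "nat \<Rightarrow> vtx" where "dec u = inv_into {x. valid x} enc u"

lemma dec_enc[simp]: "valid x \<Longrightarrow> dec (enc x) = x"
  unfolding dec_def by (rule inv_into_f_f[OF enc_inj_on]) simp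

declare enc.simps[simp del]

lemma E_dec: "E u v \<Longrightarrow> valid (dec u) \<and> valid (dec v) \<and> u = enc (dec u) \<and> v = enc (dec v) \<and> adjV (dec u) (dec v)"
  unfolding E_def by auto

lemma E_enc: "valid x \<Longrightarrow> valid y \<Longrightarrow> adjV x y \<Longrightarrow> E (enc x) (enc y)"
  unfolding E_def by blast

lemma fwd_irrefl: "\<not> fwd x x"
  by (cases x) auto

lemma adjV_sym: "adjV x y = adjV y x"
  unfolding adjV_def by auto

lemma simple: "simple_graph N E"
proof -
  have 1: "\<forall>u v. E u v \<longrightarrow> u < N \<and> v < N" unfolding E_def using enc_lt by auto
  have 2: "\<forall>u v. E u v \<longrightarrow> E v u" unfolding E_def using adjV_sym by blast
  have 3: "\<forall>u. \<not> E u u"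
  proof (intro allI notI)
    fix u assume "E u u"
    then obtain x y where "valid x" "valid y" "adjV x y" "enc x = enc y" unfolding E_def by auto
    hence "x = y" using enc_inj by blast
    thus False using \<open>adjV x y\<close> fwd_irrefl unfolding adjV_def by auto
  qed
  show ?thesis unfolding simple_graph_def using 1 2 3 by blast
qed

fun nbrs :: "vtx \<Rightarrow> vtx set" where
  "nbrs (Out l p s) = {Out l p (s+1), Pend l p s 1, if s = 0 then In l p 0 else Out l p (s-1)}"
| "nbrs (In l p s) = {In l p (s+1), if s = 0 then Out l p 0 else In l p (s-1),
     Pend (l-1) (p((l-1) mod k := p ((l-1) mod k) - s)) s (P s - 1)}"
| "nbrs (Pend l p t i) = {if i = P t - 1 then In (l+1) (upd l p t) t else Pend l p t (i+1),
     if i = 1 then Out l p t else Pend l p t (i-1)}"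

lemma card3: "card {a, b, c} \<le> 3"
  by (simp add: card_insert_if)

lemma card_nbrs: "card (nbrs x) \<le> 3"
proof (cases x)
  case (Pend l p t i)
  have "card (nbrs x) \<le> 2" using Pend by (simp add: card_insert_le_m1 card_insert_if)
  thus ?thesis by simp
qed (auto intro: card3)

lemma adj_nbrs: "valid x \<Longrightarrow> valid y \<Longrightarrow> adjV x y \<Longrightarrow> y \<in> nbrs x"
  by (cases x; cases y) (auto simp: adjV_def upd_def)

lemma nbr_sub: "{v. v < N \<and> E u v} \<subseteq> enc ` nbrs (dec u)"
proof
  fix v assume "v \<in> {v. v < N \<and> E u v}"
  hence "E u v" by simp
  from E_dec[OF this] have "dec v \<in> nbrs (dec u)" "v = enc (dec v)" using adj_nbrs by auto
  thus "v \<in> enc ` nbrs (dec u)" by auto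
qed

lemma finite_nbrs: "finite (nbrs x)" by (cases x) auto

lemma deg_le: "degree N E u \<le> 3"
proof -
  have "degree N E u \<le> card (enc ` nbrs (dec u))"
    unfolding degree_def by (rule card_mono[OF _ nbr_sub]) (simp add: finite_nbrs)
  also have "\<dots> \<le> card (nbrs (dec u))" by (rule card_image_le[OF finite_nbrs])
  also have "\<dots> \<le> 3" by (rule card_nbrs)
  finally show ?thesis .
qed

definition "z0 = restrict (\<lambda>_. 0::nat) {..<k}"

lemma z0_ok: "pos_ok z0"
  unfolding pos_ok_def z0_def Q_def using T_ge2 by (auto simp: PiE_iff)

lemma deg3: "degree N E (enc (Out 1 z0 0)) = 3"
proof -
  have k2: "1 < 2*k" using k_pos by simp
  have v1: "valid (Out 1 z0 0)" "valid (Out 1 z0 1)" "valid (In 1 z0 0)" "valid (Pend 1 z0 0 1)"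
    using k2 z0_ok T_ge2 P_bounds(1)[of 0]
    by (auto simp: z0_def Q_def pend_ok_def)
  have "{enc (Out 1 z0 1), enc (Pend 1 z0 0 1), enc (In 1 z0 0)} \<subseteq> {v. v < N \<and> E (enc (Out 1 z0 0)) v}"
    using v1 by (auto intro!: E_enc enc_lt simp: adjV_def simp del: enc.simps)
  moreover have "card {enc (Out 1 z0 1), enc (Pend 1 z0 0 1), enc (In 1 z0 0)} = 3"
  proof -
    have "enc (Out 1 z0 1) mod 3 = 0" "enc (Pend 1 z0 0 1) mod 3 = 2" "enc (In 1 z0 0) mod 3 = 1"
      by (rule enc_mod3)+
    hence "enc (Out 1 z0 1) \<noteq> enc (Pend 1 z0 0 1)" "enc (Out 1 z0 1) \<noteq> enc (In 1 z0 0)"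
      "enc (Pend 1 z0 0 1) \<noteq> enc (In 1 z0 0)" by (auto simp del: enc.simps)
    thus ?thesis by (simp del: enc.simps)
  qed
  ultimately have "3 \<le> degree N E (enc (Out 1 z0 0))" unfolding degree_def
    by (metis (no_types, lifting) card_mono finite_nat_set_iff_bounded mem_Collect_eq)
  thus ?thesis using deg_le[of "enc (Out 1 z0 0)"] by simp
qed

lemma maxdeg: "max_degree N E = 3"
proof -
  have v: "valid (Out 1 z0 0)" using k_pos z0_ok T_ge2 by auto
  have "enc (Out 1 z0 0) \<in> {0..<N}" using enc_lt[OF v] by simp
  hence "3 \<in> degree N E ` {0..<N}" using deg3 by (metis image_eqI)
  thus ?thesis unfolding max_degree_def using deg_le by (intro Max_eqI) auto
qed

section \<open>Potential\<close>

definition al :: "(nat \<Rightarrow> nat) \<Rightarrow> nat \<Rightarrow> nat" where "al a l = a (l mod k)"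

definition Bp :: "(nat \<Rightarrow> nat) \<Rightarrow> nat \<Rightarrow> (nat \<Rightarrow> nat) \<Rightarrow> int" where
  "Bp a l p = 4 * (\<Sum>j<k. int (a j) * int (p j)) + int l * int M - 2 * (\<Sum>m<l. int (a (m mod k))^2)"

definition f0 :: "(nat \<Rightarrow> nat) \<Rightarrow> nat \<Rightarrow> (nat \<Rightarrow> nat) \<Rightarrow> nat \<Rightarrow> int" where
  "f0 a l p t = Bp a l p + 1 + int (min t (al a l))"

definition f1 :: "(nat \<Rightarrow> nat) \<Rightarrow> nat \<Rightarrow> (nat \<Rightarrow> nat) \<Rightarrow> nat \<Rightarrow> int" where
  "f1 a l p t = Bp a (l+1) (upd l p t) - int (min t (al a l))"

fun phi :: "(nat \<Rightarrow> nat) \<Rightarrow> vtx \<Rightarrow> int" where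
  "phi a (Out l p s) = Bp a l p + 1 + int (min s (al a l))"
| "phi a (In l p s) = Bp a l p - int (min s (al a (l - 1)))"
| "phi a (Pend l p t i) = max (f0 a l p t - int i) (f1 a l p t - (int (P t) - int i))"

lemma phi_f0: "phi a (Out l p t) = f0 a l p t" by (simp add: f0_def)
lemma phi_f1: "phi a (In (l+1) (upd l p t) t) = f1 a l p t" by (simp add: f1_def)

lemma lmodk: "l mod k < k" using k_pos by simp

lemma sum_upd: "(\<Sum>i<k. int (a i) * int (upd l p t i)) = (\<Sum>i<k. int (a i) * int (p i)) + int (a (l mod k)) * int t"
proof -
  have "(\<Sum>i<k. int (a i) * int (upd l p t i)) = (\<Sum>i<k. int (a i) * int (p i) + (if i = l mod k then int (a (l mod k)) * int t else 0))"
    by (rule sum.cong) (auto simp: upd_def algebra_simps)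
  also have "\<dots> = (\<Sum>i<k. int (a i) * int (p i)) + int (a (l mod k)) * int t"
    using lmodk by (simp add: sum.distrib)
  finally show ?thesis .
qed

lemma Bp_step: "Bp a (l+1) (upd l p t) - Bp a l p = 4 * int (al a l) * int t + int M - 2 * int (al a l)^2"
  unfolding Bp_def al_def using sum_upd[of a l p t] by (simp add: algebra_simps)

lemma P_int: "int (P t) = int M + 2 * int t * int t - 2 * int t - 1"
proof -
  have "2*t \<le> 2*t*t" by (cases t) auto
  moreover have "M \<ge> 1" unfolding M_def by simp
  ultimately have "P t + (2*t + 1) = M + 2*t*t" unfolding P_def by arith
  hence "int (P t + (2*t + 1)) = int (M + 2*t*t)" by simp
  thus ?thesis by simp
qed

lemma gap: "int (P t) - (f1 a l p t - f0 a l p t) =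
   2 * (int t - int (al a l))^2 - 2 * (if t \<le> al a l then 0 else int t - int (al a l))"
proof -
  have "f1 a l p t - f0 a l p t = 4 * int (al a l) * int t + int M - 2 * int (al a l)^2 - 2 * int (min t (al a l)) - 1"
    using Bp_step[of a l p t] unfolding f0_def f1_def by simp
  thus ?thesis using P_int[of t] by (auto simp: power2_eq_square algebra_simps min_def)
qed

lemma gap_nonneg: "f1 a l p t - f0 a l p t \<le> int (P t)"
proof -
  define d where "d = int t - int (al a l)"
  have "2 * d^2 - 2 * (if t \<le> al a l then 0 else d) \<ge> 0"
  proof (cases "t \<le> al a l")
    case False
    hence "d \<ge> 1" unfolding d_def by simp
    hence "d * 1 \<le> d * d" by (intro mult_left_mono) auto
    thus ?thesis using False by (simp add: power2_eq_square)
  qed simp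
  thus ?thesis using gap[of t a l p] unfolding d_def by simp
qed

lemma gap_zero: "t \<le> al a l \<Longrightarrow> f1 a l p t - f0 a l p t = int (P t) \<Longrightarrow> t = al a l"
  using gap[of t a l p] by (simp add: power2_eq_square)

lemma gap_zero': "f1 a l p (al a l) - f0 a l p (al a l) = int (P (al a l))"
  using gap[of "al a l" a l p] by simp

lemma gap_low: assumes "t < T" "al a l < T" shows "f1 a l p t - f0 a l p t + int (P t) \<ge> 2"
proof -
  let ?al = "int (al a l)" and ?t = "int t" and ?T = "int T"
  have e: "f1 a l p t - f0 a l p t = 4 * ?al * ?t + int M - 2 * ?al^2 - 2 * int (min t (al a l)) - 1"
    using Bp_step[of a l p t] unfolding f0_def f1_def by simp
  have M: "int M = 2 * ?T^2 + 4" unfolding M_def by simp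
  have a1: "?al * ?al \<le> ?T * ?T" using assms by (intro mult_mono) auto
  have a2: "int (min t (al a l)) \<le> ?T" "?t \<le> ?T" using assms by auto
  have a3: "0 \<le> ?al * ?t" "0 \<le> ?t * ?t" by auto
  have a4: "0 \<le> (?T - 1) * (?T - 1)" by simp
  have e': "f1 a l p t - f0 a l p t = 4 * (?al * ?t) + int M - 2 * (?al * ?al) - 2 * int (min t (al a l)) - 1"
    using e by (simp add: power2_eq_square algebra_simps)
  have M': "int M = 2 * (?T * ?T) + 4" using M by (simp add: power2_eq_square)
  have P': "int (P t) = int M + 2 * (?t * ?t) - 2 * ?t - 1" using P_int[of t] by (simp add: algebra_simps)
  have a4': "0 \<le> ?T * ?T - 2 * ?T + 1" using a4 by (simp add: algebra_simps)
  show ?thesis using e' M' P' a1 a2 a3 a4' by linarith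
qed

definition aok :: "(nat \<Rightarrow> nat) \<Rightarrow> bool" where "aok a \<longleftrightarrow> (\<forall>j<k. a j < T)"

lemma al_lt: "aok a \<Longrightarrow> al a l < T" unfolding aok_def al_def using lmodk by auto

lemma pend_facts: "aok a \<Longrightarrow> t < T \<Longrightarrow> f1 a l p t - f0 a l p t \<le> int (P t) \<and> f1 a l p t - f0 a l p t + int (P t) \<ge> 2"
  using gap_nonneg gap_low al_lt by blast

lemma P1: "int (P t - 1) = int (P t) - 1" using P_bounds(1)[of t] by simp

lemma lip_fwd: assumes "aok a" "valid x" "valid y" "fwd x y" shows "\<bar>phi a y - phi a x\<bar> \<le> 1"
proof (cases x)
  case (Out l p s)
  show ?thesis
  proof (cases y)
    case (Out l' p' s') thus ?thesis using assms \<open>x = Out l p s\<close> by (auto simp: min_def)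
  next
    case (Pend l' p' t' i')
    hence y: "y = Pend l p s 1" using assms \<open>x = Out l p s\<close> by auto
    have "s < T" using assms(2) Out by simp
    from pend_facts[OF assms(1) this, of l p] show ?thesis using y Out phi_f0[of a l p s]
      by (auto simp: max_def abs_le_iff)
  qed (use assms Out in auto)
next
  case (In l p s)
  show ?thesis
  proof (cases y)
    case (In l' p' s') thus ?thesis using assms \<open>x = In l p s\<close> by (auto simp: min_def)
  next
    case (Out l' p' s') thus ?thesis using assms \<open>x = In l p s\<close> by auto
  qed (use assms In in auto)
next
  case (Pend l p t i)
  note X = this
  have tT: "t < T" using assms(2) Pend by (simp add: pend_ok_def)
  note pf = pend_facts[OF assms(1) tT, of l p]
  show ?thesis
  proof (cases y)
    case (Pend l' p' t' i')
    hence y: "y = Pend l p t (i+1)" using assms \<open>x = Pend l p t i\<close> by auto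
    show ?thesis using y X by (auto simp: max_def abs_le_iff)
  next
    case (In l' p' s')
    hence y: "y = In (l+1) (upd l p t) t" and i: "i = P t - 1" using assms \<open>x = Pend l p t i\<close> by auto
    show ?thesis using y X i phi_f1[of a l p t] pf P1[of t] by (auto simp: max_def abs_le_iff)
  qed (use assms X in auto)
qed

lemma lip: assumes "aok a" "E u v" shows "phi a (dec v) \<le> phi a (dec u) + 1"
proof -
  from E_dec[OF assms(2)] have "valid (dec u)" "valid (dec v)" "adjV (dec u) (dec v)" by auto
  thus ?thesis using lip_fwd[OF assms(1)] unfolding adjV_def by fastforce
qed

lemma walk_bound:
  assumes "aok a" "p 0 = u" "\<forall>i<len. E (p i) (p (Suc i))" "i \<le> j" "j \<le> len"
  shows "phi a (dec (p j)) \<le> phi a (dec (p i)) + int (j - i)"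
  using assms(4,5)
proof (induction j)
  case 0 thus ?case by simp
next
  case (Suc j)
  show ?case
  proof (cases "i = Suc j")
    case True thus ?thesis by simp
  next
    case False
    hence "i \<le> j" using Suc by simp
    hence "phi a (dec (p j)) \<le> phi a (dec (p i)) + int (j - i)" using Suc by simp
    moreover have "phi a (dec (p (Suc j))) \<le> phi a (dec (p j)) + 1"
      using lip[OF assms(1)] assms(3) Suc by simp
    ultimately show ?thesis using \<open>i \<le> j\<close> by simp
  qed
qed

lemma walk_lower:
  assumes "aok a" "has_walk N E len u v"
  shows "phi a (dec v) \<le> phi a (dec u) + int len"
proof -
  obtain p where "p 0 = u" "p len = v" "\<forall>i<len. E (p i) (p (Suc i))"
    using assms(2) unfolding has_walk_def by blast
  thus ?thesis using walk_bound[OF assms(1), of p u len 0 len] by simp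
qed

lemma walk_tight:
  assumes "aok a" "p 0 = u" "\<forall>i<len. E (p i) (p (Suc i))" "phi a (dec (p len)) = phi a (dec u) + int len"
    "i \<le> len"
  shows "phi a (dec (p i)) = phi a (dec u) + int i"
proof -
  have "phi a (dec (p i)) \<le> phi a (dec (p 0)) + int (i - 0)" using walk_bound[OF assms(1-3), of 0 i] assms(5) by simp
  moreover have "phi a (dec (p len)) \<le> phi a (dec (p i)) + int (len - i)" using walk_bound[OF assms(1-3), of i len] assms(5) by simp
  ultimately show ?thesis using assms(2,4,5) by simp
qed

section \<open>Canonical path\<close>

definition cnt :: "nat \<Rightarrow> nat \<Rightarrow> nat" where
  "cnt l j = (if j < l then 1 else 0) + (if j + k < l then 1 else 0)"

definition cp :: "(nat \<Rightarrow> nat) \<Rightarrow> (nat \<Rightarrow> nat) \<Rightarrow> nat \<Rightarrow> (nat \<Rightarrow> nat)" where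
  "cp x a l = (\<lambda>j. if j < k then x j + cnt l j * a j else undefined)"

definition Canon :: "(nat \<Rightarrow> nat) \<Rightarrow> (nat \<Rightarrow> nat) \<Rightarrow> vtx \<Rightarrow> bool" where
  "Canon x a y \<longleftrightarrow>
     (\<exists>l s. y = Out l (cp x a l) s \<and> l < 2*k \<and> s \<le> al a l) \<or>
     (\<exists>l i. y = Pend l (cp x a l) (al a l) i \<and> l < 2*k \<and> 1 \<le> i \<and> i < P (al a l)) \<or>
     (\<exists>l s. y = In l (cp x a l) s \<and> 1 \<le> l \<and> l \<le> 2*k \<and> s \<le> al a (l - 1))"

lemma cnt_step: assumes "l < 2*k" "j < k"
  shows "cnt (l+1) j = cnt l j + (if j = l mod k then 1 else 0)"
proof (cases "l < k")
  case True
  hence "l mod k = l" by simp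
  thus ?thesis using True assms unfolding cnt_def by auto
next
  case False
  hence "l mod k = l - k" using assms(1) by (simp add: le_mod_geq)
  thus ?thesis using False assms unfolding cnt_def by auto
qed

lemma cp_step: "l < 2*k \<Longrightarrow> upd l (cp x a l) (al a l) = cp x a (l+1)"
  unfolding upd_def cp_def al_def using lmodk[of l] cnt_step[of l]
  by (auto simp: fun_eq_iff algebra_simps)

lemma cnt_le: "cnt l j \<le> 2" unfolding cnt_def by auto

lemma cp_ok: assumes "x \<in> PiE {..<k} (\<lambda>_. {..<T})" "aok a" shows "pos_ok (cp x a l)"
proof -
  have "\<And>j. j < k \<Longrightarrow> x j + cnt l j * a j < Q"
  proof -
    fix j assume j: "j < k"
    have "x j < T" "a j < T" using assms j unfolding aok_def by auto
    moreover have "cnt l j * a j \<le> 2 * a j" using cnt_le by (intro mult_right_mono) auto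
    ultimately show "x j + cnt l j * a j < Q" unfolding Q_def by linarith
  qed
  thus ?thesis unfolding pos_ok_def cp_def by (auto simp: PiE_iff extensional_def)
qed

lemma cp0: "x \<in> PiE {..<k} (\<lambda>_. {..<T}) \<Longrightarrow> cp x a 0 = x"
  unfolding cp_def cnt_def by (auto simp: fun_eq_iff PiE_iff extensional_def)

lemma phi_pend_canon: "phi a (Pend l p (al a l) i) = f0 a l p (al a l) + int i"
  using gap_zero'[of a l p] by (simp add: max_def)

lemma closure:
  assumes a: "aok a" and Cn: "Canon x a y" and vy: "valid y" and vy': "valid y'"
    and e: "fwd y y' \<or> fwd y' y" and t: "phi a y' = phi a y + 1"
  shows "Canon x a y'"
proof -
  consider (A) l s where "y = Out l (cp x a l) s" "l < 2*k" "s \<le> al a l"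
    | (B) l i where "y = Pend l (cp x a l) (al a l) i" "l < 2*k" "1 \<le> i" "i < P (al a l)"
    | (C) l s where "y = In l (cp x a l) s" "1 \<le> l" "l \<le> 2*k" "s \<le> al a (l - 1)"
    using Cn unfolding Canon_def by blast
  thus ?thesis
  proof cases
    case A
    note Y = A
    show ?thesis
    proof (cases y')
      case (Out l' p' s')
      with Y e have "(l' = l \<and> p' = cp x a l \<and> s' = s + 1) \<or> (l = l' \<and> cp x a l = p' \<and> s = s' + 1)" by auto
      thus ?thesis
      proof
        assume h: "l' = l \<and> p' = cp x a l \<and> s' = s + 1"
        hence "s < al a l" using t Y Out by (auto simp: min_def split: if_splits)
        thus ?thesis using h Out Y unfolding Canon_def by auto
      next
        assume h: "l = l' \<and> cp x a l = p' \<and> s = s' + 1"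
        thus ?thesis using t Y Out by (auto simp: min_def split: if_splits)
      qed
    next
      case (Pend l' p' t' i')
      with Y e have h: "l' = l \<and> p' = cp x a l \<and> t' = s \<and> i' = 1" by auto
      have sT: "s < T" using vy Y by simp
      have "f1 a l (cp x a l) s - f0 a l (cp x a l) s = int (P s)"
        using t Y Pend h phi_f0[of a l "cp x a l" s] by (auto simp: max_def split: if_splits)
      hence "s = al a l" using gap_zero Y by blast
      thus ?thesis using h Pend Y P_bounds(1)[of s] unfolding Canon_def by auto
    next
      case (In l' p' s')
      with Y e have "s = 0 \<and> l' = l \<and> p' = cp x a l \<and> s' = 0" by auto
      thus ?thesis using t Y In by simp
    qed
  next
    case B
    note Y = B
    show ?thesis
    proof (cases y')
      case (Out l' p' s')
      with Y e have "l' = l \<and> p' = cp x a l \<and> s' = al a l \<and> i = 1" by auto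
      thus ?thesis using t Y Out phi_pend_canon[of a l "cp x a l" i] phi_f0[of a l "cp x a l" "al a l"] by simp
    next
      case (Pend l' p' t' i')
      with Y e have "(l' = l \<and> p' = cp x a l \<and> t' = al a l \<and> i' = i + 1) \<or> (l = l' \<and> cp x a l = p' \<and> al a l = t' \<and> i = i' + 1)" by auto
      thus ?thesis
      proof
        assume h: "l' = l \<and> p' = cp x a l \<and> t' = al a l \<and> i' = i + 1"
        thus ?thesis using Pend Y vy' unfolding Canon_def by auto
      next
        assume h: "l = l' \<and> cp x a l = p' \<and> al a l = t' \<and> i = i' + 1"
        have "phi a y = f0 a l (cp x a l) (al a l) + int i"
          using Y(1) phi_pend_canon[of a l "cp x a l"] by simp
        moreover have "phi a y' = f0 a l (cp x a l) (al a l) + int i'"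
          using h Pend phi_pend_canon[of a l "cp x a l"] by auto
        ultimately show ?thesis using t h by simp
      qed
    next
      case (In l' p' s')
      with Y e have h: "i = P (al a l) - 1 \<and> l' = l + 1 \<and> p' = upd l (cp x a l) (al a l) \<and> s' = al a l" by auto
      hence "y' = In (l+1) (cp x a (l+1)) (al a l)" using In cp_step Y by simp
      thus ?thesis using Y unfolding Canon_def by auto
    qed
  next
    case C
    note Y = C
    show ?thesis
    proof (cases y')
      case (Out l' p' s')
      with Y e have "s = 0 \<and> l' = l \<and> p' = cp x a l \<and> s' = 0" by auto
      thus ?thesis using Out vy' unfolding Canon_def by auto
    next
      case (In l' p' s')
      with Y e have "(l' = l \<and> p' = cp x a l \<and> s' = s + 1) \<or> (l = l' \<and> cp x a l = p' \<and> s = s' + 1)" by auto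
      thus ?thesis
      proof
        assume h: "l' = l \<and> p' = cp x a l \<and> s' = s + 1"
        thus ?thesis using t Y In by (auto simp: min_def split: if_splits)
      next
        assume h: "l = l' \<and> cp x a l = p' \<and> s = s' + 1"
        thus ?thesis using In Y unfolding Canon_def by auto
      qed
    next
      case (Pend l0 p0 t0 i0)
      with Y e have h: "i0 = P t0 - 1 \<and> l = l0 + 1 \<and> cp x a l = upd l0 p0 t0 \<and> s = t0" by auto
      have tT: "t0 < T" using vy' Pend by (simp add: pend_ok_def)
      have yy: "y = In (l0+1) (upd l0 p0 t0) t0" using h Y(1) by metis
      have "phi a y = f1 a l0 p0 t0" using yy phi_f1[of a l0 p0 t0] by simp
      moreover have "phi a y' = max (f0 a l0 p0 t0 - (int (P t0) - 1)) (f1 a l0 p0 t0 - 1)"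
        using Pend h P1[of t0] by simp
      moreover have "f1 a l0 p0 t0 - f0 a l0 p0 t0 + int (P t0) \<ge> 2" using pend_facts[OF a tT] by blast
      ultimately have False using t by (simp add: max_def split: if_splits)
      thus ?thesis ..
    qed
  qed
qed

lemma walk_canon_aux:
  assumes a: "aok a" and x: "x \<in> PiE {..<k} (\<lambda>_. {..<T})" and p0: "p 0 = enc (Out 0 x 0)"
    and e: "\<forall>i<len. E (p i) (p (Suc i))" and t: "phi a (dec (p len)) = phi a (Out 0 x 0) + int len"
  shows "i \<le> len \<Longrightarrow> Canon x a (dec (p i))"
proof (induction i)
  case 0
  have v: "valid (Out 0 x 0)" using k_pos x T_ge2 Q_def cp_ok[OF x a, of 0] cp0[OF x] by auto
  have "Canon x a (Out 0 x 0)" unfolding Canon_def using cp0[OF x, of a] k_pos by (intro disjI1) force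
  thus ?case using p0 v by simp
next
  case (Suc i)
  have v: "valid (Out 0 x 0)" using k_pos x T_ge2 Q_def cp_ok[OF x a, of 0] cp0[OF x] by auto
  have E1: "E (p i) (p (Suc i))" using e Suc by simp
  from E_dec[OF E1] have d: "valid (dec (p i))" "valid (dec (p (Suc i)))" "adjV (dec (p i)) (dec (p (Suc i)))" by auto
  have ti: "phi a (dec (p i)) = phi a (Out 0 x 0) + int i"
    using walk_tight[OF a p0 e, of i] t p0 v Suc by simp
  have tsi: "phi a (dec (p (Suc i))) = phi a (Out 0 x 0) + int (Suc i)"
    using walk_tight[OF a p0 e, of "Suc i"] t p0 v Suc by simp
  show ?case
    using closure[OF a Suc.IH[OF Suc_leD[OF Suc.prems]] d(1) d(2)] d(3) ti tsi unfolding adjV_def by simp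
qed

definition tw :: "(nat \<Rightarrow> nat) \<Rightarrow> vtx \<Rightarrow> vtx \<Rightarrow> bool" where
  "tw a u v \<longleftrightarrow> valid u \<and> valid v \<and> (\<exists>len. has_walk N E len (enc u) (enc v) \<and> int len = phi a v - phi a u)"

lemma tw_refl: "valid u \<Longrightarrow> tw a u u"
  unfolding tw_def has_walk_def using enc_lt by (intro conjI exI[of _ 0]) (auto intro!: exI[of _ "\<lambda>_. enc u"])

lemma tw_trans: "tw a u v \<Longrightarrow> tw a v w \<Longrightarrow> tw a u w"
  unfolding tw_def
proof (elim conjE exE)
  fix l1 l2 assume h: "valid u" "valid v" "has_walk N E l1 (enc u) (enc v)" "int l1 = phi a v - phi a u"
    "valid w" "has_walk N E l2 (enc v) (enc w)" "int l2 = phi a w - phi a v"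
  show "valid u \<and> valid w \<and> (\<exists>len. has_walk N E len (enc u) (enc w) \<and> int len = phi a w - phi a u)"
    using h has_walk_trans[OF h(3) h(6)] by (intro conjI exI[of _ "l1 + l2"]) auto
qed

lemma tw_edge: "valid u \<Longrightarrow> valid v \<Longrightarrow> adjV u v \<Longrightarrow> phi a v = phi a u + 1 \<Longrightarrow> tw a u v"
  unfolding tw_def has_walk_def using enc_lt E_enc
  by (intro conjI exI[of _ 1]) (auto intro!: exI[of _ "\<lambda>i. if i = 0 then enc u else enc v"])

lemma out_spine: assumes "aok a" "l < 2*k" "pos_ok c" shows "s \<le> al a l \<Longrightarrow> tw a (Out l c 0) (Out l c s)"
proof (induction s)
  case 0 thus ?case using assms T_ge2 by (intro tw_refl) auto
next
  case (Suc s)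
  have "Suc s < T" using Suc.prems al_lt[OF assms(1), of l] by simp
  hence "tw a (Out l c s) (Out l c (Suc s))" using assms Suc.prems
    by (intro tw_edge) (auto simp: adjV_def min_def)
  thus ?case using Suc tw_trans by simp
qed

lemma pend_walk: assumes "aok a" "pend_ok l c (al a l)"
  shows "1 \<le> i \<Longrightarrow> i < P (al a l) \<Longrightarrow> tw a (Out l c (al a l)) (Pend l c (al a l) i)"
proof (induction i)
  case 0 thus ?case by simp
next
  case (Suc i)
  have vo: "valid (Out l c (al a l))" using assms by (auto simp: pend_ok_def)
  show ?case
  proof (cases "i = 0")
    case True
    thus ?thesis using assms vo phi_pend_canon[of a l c 1] phi_f0[of a l c "al a l"] P_bounds(1)[of "al a l"]
      by (intro tw_edge) (auto simp: adjV_def)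
  next
    case False
    hence "tw a (Out l c (al a l)) (Pend l c (al a l) i)" using Suc by simp
    moreover have "tw a (Pend l c (al a l) i) (Pend l c (al a l) (Suc i))"
      using assms False Suc.prems phi_pend_canon[of a l c i] phi_pend_canon[of a l c "Suc i"]
      by (intro tw_edge) (auto simp: adjV_def simp del: phi.simps)
    ultimately show ?thesis using tw_trans by blast
  qed
qed

lemma in_spine: assumes "aok a" "1 \<le> l" "l \<le> 2*k" "pos_ok c"
  shows "s \<le> al a (l - 1) \<Longrightarrow> tw a (In l c s) (In l c 0)"
proof (induction s)
  case 0 thus ?case using assms T_ge2 by (intro tw_refl) auto
next
  case (Suc s)
  have "Suc s < T" using Suc.prems al_lt[OF assms(1), of "l-1"] by simp
  hence "tw a (In l c (Suc s)) (In l c s)" using assms Suc.prems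
    by (intro tw_edge) (auto simp: adjV_def min_def)
  thus ?case using Suc tw_trans by simp
qed

lemma layer_walk: assumes a: "aok a" and x: "x \<in> PiE {..<k} (\<lambda>_. {..<T})" and l: "l < 2*k"
  shows "tw a (Out l (cp x a l) 0) (In (l+1) (cp x a (l+1)) 0)"
proof -
  let ?c = "cp x a l" and ?al = "al a l"
  have ok: "pos_ok ?c" "pos_ok (cp x a (l+1))" using cp_ok[OF x a] by auto
  have st: "upd l ?c ?al = cp x a (l+1)" using cp_step[OF l] .
  have "upd l ?c ?al (l mod k) < Q" using ok(2) st pos_ok_lt lmodk by simp
  hence pk: "pend_ok l ?c ?al" unfolding pend_ok_def upd_def using l ok al_lt[OF a] by simp
  have PP: "P ?al - 1 \<ge> 1" "P ?al - 1 < P ?al" using P_bounds(1)[of ?al] by auto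
  have w1: "tw a (Out l ?c 0) (Out l ?c ?al)" using out_spine[OF a l ok(1)] by simp
  have w2: "tw a (Out l ?c ?al) (Pend l ?c ?al (P ?al - 1))" using pend_walk[OF a pk PP] .
  have w3: "tw a (Pend l ?c ?al (P ?al - 1)) (In (l+1) (cp x a (l+1)) ?al)"
  proof (rule tw_edge)
    show "valid (Pend l ?c ?al (P ?al - 1))" using pk PP by simp
    show "valid (In (l+1) (cp x a (l+1)) ?al)" using l ok al_lt[OF a] by simp
    show "adjV (Pend l ?c ?al (P ?al - 1)) (In (l+1) (cp x a (l+1)) ?al)" using st by (simp add: adjV_def)
    have "phi a (In (l+1) (cp x a (l+1)) ?al) = f1 a l ?c ?al" using phi_f1[of a l ?c ?al] st by simp
    thus "phi a (In (l+1) (cp x a (l+1)) ?al) = phi a (Pend l ?c ?al (P ?al - 1)) + 1"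
      using phi_pend_canon[of a l ?c "P ?al - 1"] gap_zero'[of a l ?c] P1[of ?al] by simp
  qed
  have w4: "tw a (In (l+1) (cp x a (l+1)) ?al) (In (l+1) (cp x a (l+1)) 0)"
    using in_spine[OF a _ _ ok(2), of "l+1" ?al] l by simp
  show ?thesis using w1 w2 w3 w4 tw_trans by blast
qed

lemma full_walk: assumes a: "aok a" and x: "x \<in> PiE {..<k} (\<lambda>_. {..<T})"
  shows "1 \<le> l \<Longrightarrow> l \<le> 2*k \<Longrightarrow> tw a (Out 0 x 0) (In l (cp x a l) 0)"
proof (induction l)
  case 0 thus ?case by simp
next
  case (Suc l)
  show ?case
  proof (cases "l = 0")
    case True
    thus ?thesis using layer_walk[OF a x, of 0] cp0[OF x] k_pos by simp
  next
    case False
    hence IH: "tw a (Out 0 x 0) (In l (cp x a l) 0)" using Suc by simp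
    have ok: "pos_ok (cp x a l)" using cp_ok[OF x a] by auto
    have "tw a (In l (cp x a l) 0) (Out l (cp x a l) 0)"
      using False Suc.prems ok T_ge2 by (intro tw_edge) (auto simp: adjV_def)
    moreover have "tw a (Out l (cp x a l) 0) (In (Suc l) (cp x a (Suc l)) 0)"
      using layer_walk[OF a x, of l] Suc.prems by simp
    ultimately show ?thesis using IH tw_trans by blast
  qed
qed

fun lay :: "vtx \<Rightarrow> nat" where
  "lay (Out l p s) = l" | "lay (In l p s) = l" | "lay (Pend l p t i) = l"
fun pos :: "vtx \<Rightarrow> nat \<Rightarrow> nat" where
  "pos (Out l p s) = p" | "pos (In l p s) = p" | "pos (Pend l p t i) = p"

lemma canon_pos: "Canon x a y \<Longrightarrow> pos y = cp x a (lay y)"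
  unfolding Canon_def by auto

abbreviation "Xs \<equiv> PiE {..<k} (\<lambda>_. {..<T})"

lemma Xs_aok: "a \<in> Xs \<Longrightarrow> aok a" unfolding aok_def by auto

lemma recover1: assumes "x \<in> Xs" "a \<in> Xs" "a' \<in> Xs" "k \<le> l" "cp x a l = cp x a' l" shows "a = a'"
proof (rule PiE_ext[OF assms(2,3)])
  fix j assume "j \<in> {..<k}"
  hence j: "j < k" by simp
  have "cnt l j \<ge> 1" using j assms(4) unfolding cnt_def by auto
  moreover have "x j + cnt l j * a j = x j + cnt l j * a' j" using fun_cong[OF assms(5), of j] j unfolding cp_def by simp
  ultimately show "a j = a' j" by simp
qed

lemma recover2: assumes "x \<in> Xs" "a \<in> Xs" "x' \<in> Xs" "a' \<in> Xs" "l < k"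
  "cp x a (2*k) = cp x' a' (2*k)" "cp x a l = cp x' a' l" shows "x = x' \<and> a = a'"
proof -
  have h: "x j = x' j \<and> a j = a' j" if j: "j < k" for j
  proof -
    have c2: "cnt (2*k) j = 2" using j unfolding cnt_def by auto
    have c1: "cnt l j = (if j < l then 1 else 0)" using assms(5) unfolding cnt_def by auto
    have e1: "x j + 2 * a j = x' j + 2 * a' j" using fun_cong[OF assms(6), of j] j c2 unfolding cp_def by simp
    have e2: "x j + cnt l j * a j = x' j + cnt l j * a' j" using fun_cong[OF assms(7), of j] j unfolding cp_def by simp
    show ?thesis using e1 e2 c1 by (auto split: if_splits)
  qed
  have "x = x'" by (rule PiE_ext[OF assms(1,3)]) (use h in auto)
  moreover have "a = a'" by (rule PiE_ext[OF assms(2,4)]) (use h in auto)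
  ultimately show ?thesis by simp
qed

lemma gdist_eq: assumes "aok a" "has_walk N E D u v" "int D = phi a (dec v) - phi a (dec u)"
  shows "gdist N E u v = D"
  unfolding gdist_def
proof (rule Least_equality)
  show "has_walk N E D u v" by fact
  fix y assume "has_walk N E y u v"
  from walk_lower[OF assms(1) this] assms(3) show "D \<le> y" by simp
qed

lemma hub_found:
  assumes H: "hub_labeling N E S" and x: "x \<in> Xs" and a: "a \<in> Xs"
  shows "\<exists>w. w \<in> S (enc (Out 0 x 0)) \<and> w \<in> S (enc (In (2*k) (cp x a (2*k)) 0)) \<and> Canon x a (dec w)"
proof -
  let ?X = "Out 0 x 0" and ?Z = "In (2*k) (cp x a (2*k)) 0"
  have ak: "aok a" using a Xs_aok by simp
  have "tw a ?X ?Z" using full_walk[OF ak x, of "2*k"] cp0[OF x] k_pos by simp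
  then obtain D where vX: "valid ?X" and vZ: "valid ?Z" and wD: "has_walk N E D (enc ?X) (enc ?Z)"
     and D: "int D = phi a ?Z - phi a ?X"
    unfolding tw_def by blast
  have XN: "enc ?X < N" "enc ?Z < N" using enc_lt vX vZ by auto
  have g: "gdist N E (enc ?X) (enc ?Z) = D" using gdist_eq[OF ak wD] D vX vZ by simp
  have "reachable N E (enc ?X) (enc ?Z)" using wD unfolding reachable_def by blast
  then obtain w where w: "w \<in> S (enc ?X)" "w \<in> S (enc ?Z)" "reachable N E (enc ?X) w" "reachable N E w (enc ?Z)"
    "gdist N E (enc ?X) w + gdist N E w (enc ?Z) = gdist N E (enc ?X) (enc ?Z)"
    using H XN unfolding hub_labeling_def by blast
  let ?g1 = "gdist N E (enc ?X) w" and ?g2 = "gdist N E w (enc ?Z)"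
  have w1: "has_walk N E ?g1 (enc ?X) w" using w(3) unfolding reachable_def gdist_def by (rule LeastI_ex)
  have w2: "has_walk N E ?g2 w (enc ?Z)" using w(4) unfolding reachable_def gdist_def by (rule LeastI_ex)
  have l1: "phi a (dec w) \<le> phi a ?X + int ?g1" using walk_lower[OF ak w1] vX by simp
  have l2: "phi a ?Z \<le> phi a (dec w) + int ?g2" using walk_lower[OF ak w2] vZ by simp
  have tight: "phi a (dec w) = phi a ?X + int ?g1" using l1 l2 w(5) g D by linarith
  obtain p where p: "p 0 = enc ?X" "p ?g1 = w" "\<forall>i<?g1. E (p i) (p (Suc i))"
    using w1 unfolding has_walk_def by blast
  have "Canon x a (dec (p ?g1))" using walk_canon_aux[OF ak x p(1) p(3), of ?g1] p(2) tight by simp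
  thus ?thesis using w p(2) by auto
qed

lemma Xs_pos: "x \<in> Xs \<Longrightarrow> pos_ok x"
proof -
  assume "x \<in> Xs"
  moreover have "Xs \<subseteq> PiE {..<k} (\<lambda>_. {..<Q})" unfolding Q_def by (rule PiE_mono) auto
  ultimately show ?thesis unfolding pos_ok_def by blast
qed

lemma hub_count:
  assumes H: "hub_labeling N E S"
  shows "T^k * T^k \<le> (\<Sum>v<N. card (S v))"
proof -
  define X where "X q = Out 0 (fst q) 0" for q :: "(nat \<Rightarrow> nat) \<times> (nat \<Rightarrow> nat)"
  define Z where "Z q = In (2*k) (cp (fst q) (snd q) (2*k)) 0" for q :: "(nat \<Rightarrow> nat) \<times> (nat \<Rightarrow> nat)"
  define wq where "wq q = (SOME w. w \<in> S (enc (X q)) \<and> w \<in> S (enc (Z q)) \<and> Canon (fst q) (snd q) (dec w))" for q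
  define f where "f q = (if k \<le> lay (dec (wq q)) then (enc (X q), wq q) else (enc (Z q), wq q))" for q
  have wq: "wq q \<in> S (enc (X q)) \<and> wq q \<in> S (enc (Z q)) \<and> Canon (fst q) (snd q) (dec (wq q))"
    if "q \<in> Xs \<times> Xs" for q
    unfolding wq_def X_def Z_def
    by (rule someI_ex) (use hub_found[OF H] that in \<open>cases q, auto\<close>)
  have vX: "valid (X q)" "valid (Z q)" if "q \<in> Xs \<times> Xs" for q
    using that Xs_pos k_pos T_ge2 cp_ok[of "fst q" "snd q"] Xs_aok[of "snd q"] unfolding X_def Z_def
    by (auto simp: mem_Times_iff)
  have sub: "f ` (Xs \<times> Xs) \<subseteq> Sigma {..<N} S"
  proof
    fix r assume "r \<in> f ` (Xs \<times> Xs)"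
    then obtain q where q: "q \<in> Xs \<times> Xs" "r = f q" by blast
    show "r \<in> Sigma {..<N} S" using q wq[OF q(1)] vX[OF q(1)] enc_lt unfolding f_def by auto
  qed
  have inj: "inj_on f (Xs \<times> Xs)"
  proof (rule inj_onI)
    fix q q' assume q: "q \<in> Xs \<times> Xs" and q': "q' \<in> Xs \<times> Xs" and e: "f q = f q'"
    obtain x a where qq: "q = (x, a)" by (cases q)
    obtain x' a' where qq': "q' = (x', a')" by (cases q')
    have mem: "x \<in> Xs" "a \<in> Xs" "x' \<in> Xs" "a' \<in> Xs" using q q' qq qq' by auto
    have ww: "wq q = wq q'" using e unfolding f_def by (auto split: if_splits)
    let ?y = "dec (wq q)"
    have C: "Canon x a ?y" "Canon x' a' ?y" using wq[OF q] wq[OF q'] qq qq' ww by auto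
    have P1: "pos ?y = cp x a (lay ?y)" "pos ?y = cp x' a' (lay ?y)" using canon_pos[OF C(1)] canon_pos[OF C(2)] by auto
    show "q = q'"
    proof (cases "k \<le> lay ?y")
      case True
      have "f q = (enc (X q), wq q)" using True unfolding f_def by (simp only: if_True)
      moreover have "f q' = (enc (X q'), wq q')" using True unfolding f_def ww by (simp only: if_True)
      ultimately have "enc (X q) = enc (X q')" using e by (metis fst_conv)
      hence "X q = X q'" using enc_inj[OF vX(1)[OF q] vX(1)[OF q']] by blast
      hence "x = x'" using qq qq' unfolding X_def by simp
      hence "a = a'" using recover1[OF mem(1,2), of a' "lay ?y"] mem True P1 by simp
      thus ?thesis using qq qq' \<open>x = x'\<close> by simp
    next
      case False
      have "f q = (enc (Z q), wq q)" using False unfolding f_def by (simp only: if_False)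
      moreover have "f q' = (enc (Z q'), wq q')" using False unfolding f_def ww by (simp only: if_False)
      ultimately have "enc (Z q) = enc (Z q')" using e by (metis fst_conv)
      hence "Z q = Z q'" using enc_inj[OF vX(2)[OF q] vX(2)[OF q']] by blast
      hence "cp x a (2*k) = cp x' a' (2*k)" using qq qq' unfolding Z_def by simp
      thus ?thesis using recover2[OF mem, of "lay ?y"] False P1 qq qq' by simp
    qed
  qed
  have fin: "finite (Sigma {..<N} S)"
    using H unfolding hub_labeling_def by (auto intro!: finite_SigmaI intro: finite_subset)
  have "card (Xs \<times> Xs) \<le> card (Sigma {..<N} S)" using card_inj_on_le[OF inj sub fin] .
  also have "\<dots> = (\<Sum>v<N. card (S v))"
    using H unfolding hub_labeling_def by (subst card_SigmaI) (auto intro: finite_subset)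
  finally show ?thesis by (simp add: card_cartesian_product card_PiE)
qed


section \<open>Size estimates\<close>

lemma L_le: "2*k+1 \<le> (4::nat)^k"
  using k_pos
proof (induction k rule: dec_induct)
  case base thus ?case by simp
next
  case (step m)
  have "2*(Suc m)+1 \<le> 4 * (2*m+1)" by simp
  also have "\<dots> \<le> 4 * 4^m" using step by simp
  finally show ?case by simp
qed

lemma N_bounds: "2^(k*k) \<le> N" "N \<le> 2^(k*k + 12*k)"
proof -
  have T: "T = 2^k" by (simp add: T_def)
  have e1: "((2::nat)^k)^k = 2^(k*k)" by (rule power_mult[symmetric])
  have PQ: "PQ = 3^k * 2^(k*k)" unfolding PQ_def Q_def T power_mult_distrib e1 ..
  have e2: "((2::nat)^k)^2 = 4^k"
  proof -
    have "((2::nat)^k)^2 = 2^(k*2)" by (rule power_mult[symmetric])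
    also have "\<dots> = (2^2)^k" by (simp only: mult.commute[of k 2] power_mult)
    finally show ?thesis by simp
  qed
  have W: "W = 4 * 4^k + 4" unfolding W_def M_def T e2 by simp
  have pos: "1 \<le> 3 * L * 3^k * T * W" unfolding L_def T W by simp
  have "2^(k*k) \<le> 2^(k*k) * (3 * L * 3^k * T * W)" using pos by simp
  also have "\<dots> = N" unfolding N_def PQ by (simp add: algebra_simps)
  finally show "2^(k*k) \<le> N" .
  have a1: "L \<le> 4^k" using L_le unfolding L_def by simp
  have a2: "(3::nat)^k \<le> 4^k" by (simp add: power_mono)
  have a3: "W \<le> 8 * 4^k" unfolding W using k_pos
    by (simp add: order_trans[OF _ mult_le_mono2[OF one_le_power[of 4 k]]])
  have "N = (3 * L) * 3^k * 2^(k*k) * T * W" unfolding N_def PQ by (simp add: algebra_simps)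
  also have "\<dots> \<le> (4 * 4^k) * 4^k * 2^(k*k) * 2^k * (8 * 4^k)"
    using a1 a2 a3 unfolding T by (intro mult_mono) auto
  also have "\<dots> = 2^(k*k + 7*k + 5)"
  proof -
    have e4: "(4::nat)^k = 2^(2*k)" by (simp add: power_mult)
    have ex: "k*k + 7*k + 5 = k*k + k + 2*k + 2*k + 2*k + 5" by simp
    have "(2::nat)^(k*k + 7*k + 5) = 2^(k*k) * 2^k * 2^(2*k) * 2^(2*k) * 2^(2*k) * 2^5"
      unfolding ex power_add ..
    thus ?thesis unfolding e4 by simp
  qed
  also have "\<dots> \<le> 2^(k*k + 12*k)" using k_pos by (intro power_increasing) auto
  finally show "N \<le> 2^(k*k + 12*k)" .
qed

lemma final:
  assumes H: "hub_labeling N E S"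
  shows "real N / 2 powr (100 * sqrt (ln (real N))) \<le> (\<Sum>v<N. real (card (S v))) / real N"
proof -
  define s where "s = (\<Sum>v<N. real (card (S v)))"
  have "real (T^k * T^k) \<le> s" unfolding s_def using hub_count[OF H]
    by (metis of_nat_le_iff of_nat_sum)
  moreover have "T^k * T^k = (2::nat)^(2*(k*k))" unfolding T_def
    by (simp add: power_mult[symmetric] power_add[symmetric] mult_2)
  ultimately have "real ((2::nat)^(2*(k*k))) \<le> s" by simp
  hence s1: "2 powr real (2*(k*k)) \<le> s" using powr_realpow[of "2::real" "2*(k*k)"] by simp
  have "real ((2::nat)^(k*k)) \<le> real N" using N_bounds(1) by (simp only: of_nat_le_iff)
  hence Nlo: "2 powr real (k*k) \<le> real N" using powr_realpow[of "2::real" "k*k"] by simp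
  have "real N \<le> real ((2::nat)^(k*k + 12*k))" using N_bounds(2) by (simp only: of_nat_le_iff)
  hence Nup: "real N \<le> 2 powr real (k*k + 12*k)" using powr_realpow[of "2::real" "k*k + 12*k"] by simp
  have Npos: "real N > 0" using Nlo powr_gt_zero[of 2 "real (k*k)"] by linarith
  have "ln (2 powr real (k*k)) \<le> ln (real N)" using Nlo Npos by (subst ln_le_cancel_iff) auto
  moreover have "ln (2 powr real (k*k)) = real (k*k) * ln 2" by (rule ln_powr)
  ultimately have "ln (real N) \<ge> real (k*k) * ln 2" by simp
  moreover have "ln (2::real) \<ge> 1/4" using ln2_ge_two_thirds by simp
  hence "real (k*k) * (1/4) \<le> real (k*k) * ln 2" by (intro mult_left_mono) simp_all
  moreover have "(real k / 2)^2 = real (k*k) * (1/4)" by (simp add: power2_eq_square)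
  ultimately have "ln (real N) \<ge> (real k / 2)^2" using \<open>ln (real N) \<ge> real (k*k) * ln 2\<close> by linarith
  hence "sqrt ((real k / 2)^2) \<le> sqrt (ln (real N))" by (rule real_sqrt_le_mono)
  hence sq: "sqrt (ln (real N)) \<ge> real k / 2" by simp
  hence "100 * sqrt (ln (real N)) \<ge> 24 * real k" by simp
  hence pw: "2 powr (100 * sqrt (ln (real N))) \<ge> 2 powr (24 * real k)" by simp
  have "real N * real N \<le> 2 powr real (k*k + 12*k) * 2 powr real (k*k + 12*k)"
    using Nup Npos by (intro mult_mono) auto
  also have "\<dots> = 2 powr real (2*(k*k)) * 2 powr (24 * real k)"
    unfolding powr_add[symmetric] by (simp add: algebra_simps)
  also have "\<dots> \<le> s * 2 powr (100 * sqrt (ln (real N)))"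
    using s1 pw by (intro mult_mono) (auto simp: s_def sum_nonneg)
  finally have key: "real N * real N \<le> s * 2 powr (100 * sqrt (ln (real N)))" .
  have pp: "2 powr (100 * sqrt (ln (real N))) > 0" by simp
  show ?thesis unfolding s_def[symmetric] using key Npos pp by (simp add: field_simps)
qed

end

theorem theorem1:
  shows "\<exists>C::real. C > 0 \<and>
    infinite {n::nat. n > 0 \<and>
      (\<exists>E. simple_graph n E \<and> max_degree n E = 3 \<and>
         (\<forall>S. hub_labeling n E S \<longrightarrow>
            (\<Sum>v<n. real (card (S v))) / real n \<ge> real n / 2 powr (C * sqrt (ln (real n)))))}"
proof (intro exI[of _ 100] conjI)
  show "(100::real) > 0" by simp
  let ?A = "{n::nat. n > 0 \<and>
      (\<exists>E. simple_graph n E \<and> max_degree n E = 3 \<and>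
         (\<forall>S. hub_labeling n E S \<longrightarrow>
            (\<Sum>v<n. real (card (S v))) / real n \<ge> real n / 2 powr (100 * sqrt (ln (real n)))))}"
  have mem: "hubG.N k \<in> ?A" if "1 \<le> k" for k
  proof -
    interpret hubG k using that by unfold_locales
    have "0 < N" using N_bounds(1) by (metis le_trans not_less zero_less_numeral zero_less_power le_0_eq neq0_conv)
    thus ?thesis using simple maxdeg final by blast
  qed
  show "infinite ?A"
    unfolding infinite_nat_iff_unbounded_le
  proof
    fix m
    have "hubG.N (Suc m) \<in> ?A" using mem by simp
    moreover have "m \<le> hubG.N (Suc m)"
    proof -
      interpret hubG "Suc m" by unfold_locales simp
      have "m < 2^m" by (rule less_exp)
      also have "(2::nat)^m \<le> 2^(Suc m * Suc m)" by (intro power_increasing) auto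
      also have "\<dots> \<le> N" by (rule N_bounds(1))
      finally show ?thesis by simp
    qed
    ultimately show "\<exists>n\<ge>m. n \<in> ?A" by blast
  qed
qed

end
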